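(* Let $\mathcal{A}$ be a complex Banach algebra with identity, $\lambda$ a nonzero complex number, and $M = \begin{pmatrix} A & B \\ C & D \end{pmatrix} \in M_2(\mathcal{A})$ with $A, D \in \mathcal{A}^d$. If $$BD = \lambda A B D^\pi,\quad CA = \lambda D C A^\pi,\quad BC = 0,$$ then $M \in M_2(\mathcal{A})^d$ and $$M^d = \begin{pmatrix} A^d & 0 \\ 0 & D^d \end{pmatrix} + \sum_{n=0}^{\infty} (P^d)^{n+2} Q M^n,$$ where $P = \begin{pmatrix} A & 0 \\ 0 & D \end{pmatrix}$, $P^d = \begin{pmatrix} A^d & 0 \\ 0 & D^d \end{pmatrix}$ and $Q = \begin{pmatrix} 0 & B \\ C & 0 \end{pmatrix}$.
   Context: $M_2(\mathcal{A})$ is the Banach algebra of $2\times 2$ matrices over $\mathcal{A}$. An element $x$ of a Banach algebra has a generalized Drazin (g-Drazin) inverse $x^d$ if $x^d$ commutes with $x$, $x^d = x^dxx^d$ and $x - x^2x^d$ is quasinilpotent (i.e. $\lim\|y^n\|^{1/n}=0$ for $y=x-x^2x^d$); $\mathcal{A}^d$ (resp. $M_2(\mathcal{A})^d$) denotes the set of g-Drazin invertible elements. The spectral idempotent is $x^\pi = 1 - xx^d$. *)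

theory Defs
  imports "HOL-Analysis.Analysis"
begin

class complex_banach_algebra_1 = real_normed_algebra_1 + banach +
  fixes scaleC :: "complex \<Rightarrow> 'a \<Rightarrow> 'a"
  assumes scaleC_add_right: "scaleC a (x + y) = scaleC a x + scaleC a y"
    and scaleC_add_left: "scaleC (a + b) x = scaleC a x + scaleC b x"
    and scaleC_scaleC: "scaleC a (scaleC b x) = scaleC (a * b) x"
    and scaleC_one: "scaleC 1 x = x"
    and scaleR_scaleC: "scaleR r x = scaleC (of_real r) x"
    and norm_scaleC: "norm (scaleC a x) = cmod a * norm x"
    and mult_scaleC_left: "scaleC a x * y = scaleC a (x * y)"
    and mult_scaleC_right: "x * scaleC a y = scaleC a (x * y)"

definition quasinilpotent :: "'a::real_normed_algebra_1 \<Rightarrow> bool" where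
  "quasinilpotent y \<longleftrightarrow> (\<lambda>n. root n (norm (y ^ n))) \<longlonglongrightarrow> 0"

definition gdrazin_inv :: "'a::real_normed_algebra_1 \<Rightarrow> 'a \<Rightarrow> bool" where
  "gdrazin_inv x y \<longleftrightarrow> y * x = x * y \<and> y = y * x * y \<and> quasinilpotent (x - x^2 * y)"

text \<open>The norm is the (Euclidean) product norm on entries; it is equivalent to any
  Banach algebra norm on M_2(A), so quasinilpotence does not depend on it.\<close>

type_synonym 'a mat2 = "'a ^ 2 ^ 2"

definition blk2 :: "'a \<Rightarrow> 'a \<Rightarrow> 'a \<Rightarrow> 'a \<Rightarrow> 'a::zero mat2" where
  "blk2 a b c d = (\<chi> i j. if i = 1 then (if j = 1 then a else b) else (if j = 1 then c else d))"

primrec mpow :: "'a::semiring_1 mat2 \<Rightarrow> nat \<Rightarrow> 'a mat2" where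
  "mpow M 0 = mat 1"
| "mpow M (Suc n) = M ** mpow M n"

definition mquasinilpotent :: "'a::real_normed_algebra_1 mat2 \<Rightarrow> bool" where
  "mquasinilpotent Y \<longleftrightarrow> (\<lambda>n. root n (norm (mpow Y n))) \<longlonglongrightarrow> 0"

definition mgdrazin_inv :: "'a::real_normed_algebra_1 mat2 \<Rightarrow> 'a mat2 \<Rightarrow> bool" where
  "mgdrazin_inv X Y \<longleftrightarrow> Y ** X = X ** Y \<and> Y = Y ** X ** Y
     \<and> mquasinilpotent (X - X ** X ** Y)"

end

theory Submission
  imports Defs
begin




lemma blk2_nth: "blk2 a b c d $ 1 $ 1 = a" "blk2 a b c d $ 1 $ 2 = b"
  "blk2 a b c d $ 2 $ 1 = c" "blk2 a b c d $ 2 $ 2 = d"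
  by (simp_all add: blk2_def)

lemma blk2_eq_iff: "M = blk2 a b c d \<longleftrightarrow> M$1$1 = a \<and> M$1$2 = b \<and> M$2$1 = c \<and> M$2$2 = d"
  by (auto simp: blk2_def vec_eq_iff forall_2)

lemma blk2_mult: "blk2 a b c d ** blk2 e f g h = blk2 (a*e + b*g) (a*f + b*h) (c*e + d*g) (c*f + d*h)"
  by (simp add: blk2_eq_iff matrix_matrix_mult_def sum_2 blk2_nth)

lemma blk2_add: "blk2 a b c d + blk2 e f g h = blk2 (a+e) (b+f) (c+g) (d+h)"
  by (simp add: blk2_eq_iff blk2_nth)

lemma blk2_diff: "blk2 a b c d - blk2 e f g h = blk2 (a-e) (b-f) (c-g) (d-h)"
  by (simp add: blk2_eq_iff blk2_nth)

lemma blk2_zero: "(0::'a::zero mat2) = blk2 0 0 0 0"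
  by (simp add: blk2_eq_iff)

lemma blk2_one: "(mat 1::'a::semiring_1 mat2) = blk2 1 0 0 1"
  by (simp add: blk2_eq_iff mat_def)

lemma norm_vec2: "norm (x::'b::real_normed_vector^2) \<le> norm (x$1) + norm (x$2)"
  unfolding norm_vec_def by (rule order_trans[OF L2_set_le_sum]) (auto simp: sum_2)

lemma norm_blk2: "norm (blk2 a b c d) \<le> norm a + norm b + norm c + norm d"
  using norm_vec2[of "blk2 a b c d"] norm_vec2[of "blk2 a b c d $ 1"] norm_vec2[of "blk2 a b c d $ 2"]
  by (simp add: blk2_nth)

lemma mpow_diag: "mpow (blk2 a 0 0 d) n = blk2 (a^n) 0 0 (d^n)"
  by (induction n) (simp_all add: blk2_one blk2_mult)





lemma qn_eps:
  fixes x :: "'a::real_normed_algebra_1"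
  assumes "quasinilpotent x" "e > 0"
  shows "\<exists>Cc. \<forall>n. norm (x^n) \<le> Cc * e^n"
proof -
  have "eventually (\<lambda>n. root n (norm (x^n)) < e) sequentially"
    using assms unfolding quasinilpotent_def by (rule order_tendstoD(2))
  then obtain N0 where N0: "\<And>n. n \<ge> N0 \<Longrightarrow> root n (norm (x^n)) < e"
    by (auto simp: eventually_sequentially)
  define Cc where "Cc = 1 + (\<Sum>k\<le>N0. norm (x^k) / e^k)"
  have s0: "0 \<le> (\<Sum>k\<le>N0. norm (x^k) / e^k)"
    using assms(2) by (intro sum_nonneg) auto
  have "norm (x^n) \<le> Cc * e^n" for n
  proof (cases "n \<le> N0")
    case True
    have "norm (x^n) / e^n \<le> (\<Sum>k\<le>N0. norm (x^k) / e^k)"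
      using True assms(2) by (intro member_le_sum) auto
    also have "\<dots> \<le> Cc" unfolding Cc_def by simp
    finally show ?thesis using assms(2) by (simp add: divide_le_eq)
  next
    case False
    then have n0: "n > 0" by simp
    have "norm (x^n) = root n (norm (x^n)) ^ n"
      using n0 by (simp add: real_root_pow_pos2)
    also have "\<dots> \<le> e ^ n"
      using N0[of n] False by (intro power_mono) auto
    also have "\<dots> \<le> Cc * e^n" using s0 assms(2) unfolding Cc_def
      by (simp add: distrib_right)
    finally show ?thesis .
  qed
  then show ?thesis by blast
qed

lemma root_eps:
  fixes f :: "nat \<Rightarrow> real"
  assumes f0: "\<And>n. 0 \<le> f n" and fb: "\<And>e. e > 0 \<Longrightarrow> \<exists>Cc. \<forall>n. f n \<le> Cc * e^n"
  shows "(\<lambda>n. root n (f n)) \<longlonglongrightarrow> 0"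
proof (rule LIMSEQ_I)
  fix r :: real assume r: "0 < r"
  obtain Cc where Cc: "\<And>n. f n \<le> Cc * (r/2)^n" using fb[of "r/2"] r by auto
  define C1 where "C1 = max Cc 1"
  have C1: "f n \<le> C1 * (r/2)^n" for n
    using Cc[of n] r unfolding C1_def
    by (meson max.cobounded1 mult_right_mono order_trans zero_le_divide_iff zero_le_power less_imp_le zero_le_numeral)
  have "(\<lambda>n. root n C1) \<longlonglongrightarrow> 1" unfolding C1_def by (rule LIMSEQ_root_const) simp
  then have "eventually (\<lambda>n. root n C1 < 2) sequentially" by (rule order_tendstoD) simp
  then obtain N1 where N1: "\<And>n. n \<ge> N1 \<Longrightarrow> root n C1 < 2" by (auto simp: eventually_sequentially)
  show "\<exists>no. \<forall>n\<ge>no. norm (root n (f n) - 0) < r"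
  proof (intro exI allI impI)
    fix n assume n: "n \<ge> Suc N1"
    then have n0: "n > 0" by simp
    have "root n (f n) \<le> root n (C1 * (r/2)^n)" using C1 n0 by simp
    also have "\<dots> = root n C1 * (r/2)" using n0 r
      by (simp add: real_root_mult real_root_power_cancel)
    also have "\<dots> < 2 * (r/2)" using N1[of n] n r by (intro mult_strict_right_mono) auto
    finally have "root n (f n) < r" by simp
    moreover have "0 \<le> root n (f n)" using f0[of n] by (rule real_root_ge_zero)
    ultimately show "norm (root n (f n) - 0) < r" by simp
  qed
qed





context complex_banach_algebra_1 begin
lemma scaleC_zero_right[simp]: "scaleC a 0 = 0"
  using scaleC_add_right[of a 0 0] by simp
lemma scaleC_zero_left[simp]: "scaleC 0 x = 0"
  using scaleC_add_left[of 0 0 x] by simp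
lemma scaleC_diff_right: "scaleC a (x - y) = scaleC a x - scaleC a y"
  using scaleC_add_right[of a "x - y" y] by (simp add: eq_diff_eq)
end

lemma annih:
  fixes y g d :: "'a::complex_banach_algebra_1"
  assumes lam: "lam \<noteq> 0" and qn: "quasinilpotent d" and e: "scaleC lam y = g * y * d"
  shows "y = 0"
proof (rule ccontr)
  assume y0: "y \<noteq> 0"
  have pw: "scaleC (lam^n) y = g^n * y * d^n" for n
  proof (induction n)
    case 0 then show ?case by (simp add: scaleC_one)
  next
    case (Suc n)
    have "scaleC (lam^Suc n) y = scaleC lam (scaleC (lam^n) y)"
      by (simp add: scaleC_scaleC)
    also have "\<dots> = g^n * scaleC lam y * d^n" using Suc
      by (simp add: mult_scaleC_left mult_scaleC_right)
    also have "\<dots> = g^n * (g * y * d) * d^n" using e by simp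
    also have "\<dots> = g^Suc n * y * d^Suc n"
    proof -
      have "g^Suc n = g^n*g" "d^Suc n = d*d^n" by (rule power_Suc2, rule power_Suc)
      then show ?thesis by (simp only: mult.assoc)
    qed
    finally show ?case .
  qed
  define ep where "ep = cmod lam / (norm g + 1)"
  have ep0: "ep > 0" using lam unfolding ep_def by (auto intro!: divide_pos_pos add_nonneg_pos)
  have "eventually (\<lambda>n. root n (norm (d^n)) < ep) sequentially"
    using qn ep0 unfolding quasinilpotent_def by (rule order_tendstoD(2))
  then obtain N0 where N0: "\<And>n. n \<ge> N0 \<Longrightarrow> root n (norm (d^n)) < ep"
    by (auto simp: eventually_sequentially)
  define n where "n = Suc N0"
  have n0: "n > 0" unfolding n_def by simp
  have dn: "norm (d^n) \<le> ep^n"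
  proof -
    have "norm (d^n) = root n (norm (d^n)) ^ n"
      using n0 by (simp add: real_root_pow_pos2)
    also have "\<dots> \<le> ep ^ n"
      using N0[of n] unfolding n_def by (intro power_mono) (auto simp: real_root_ge_zero)
    finally show ?thesis .
  qed
  have "cmod lam ^ n * norm y = norm (g^n * y * d^n)"
    unfolding pw[symmetric] norm_scaleC norm_power ..
  also have "\<dots> \<le> norm (g^n * y) * norm (d^n)" by (rule norm_mult_ineq)
  also have "\<dots> \<le> norm (g^n) * norm y * norm (d^n)"
    by (intro mult_right_mono norm_mult_ineq) simp
  also have "\<dots> \<le> norm g ^ n * norm y * ep^n"
    by (intro mult_mono norm_power_ineq dn) auto
  also have "\<dots> = (norm g * ep)^n * norm y" by (simp add: power_mult_distrib)
  finally have 1: "cmod lam ^ n * norm y \<le> (norm g * ep)^n * norm y" .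
  have "norm g * ep < cmod lam"
  proof -
    have "norm g * ep = cmod lam * (norm g / (norm g + 1))" unfolding ep_def by simp
    also have "\<dots> < cmod lam * 1"
    proof (intro mult_strict_left_mono)
      have g1: "0 < norm g + 1" by (simp add: add_nonneg_pos)
      then show "norm g / (norm g + 1) < 1" by (simp add: divide_less_eq)
    qed (use lam in simp)
    finally show ?thesis by simp
  qed
  then have "(norm g * ep)^n < cmod lam ^ n"
    using n0 ep0 by (intro power_strict_mono) auto
  then have "(norm g * ep)^n * norm y < cmod lam ^ n * norm y"
    using y0 by (intro mult_strict_right_mono) auto
  with 1 show False by simp
qed

lemma half:
  fixes A B D Ad Dd :: "'a::complex_banach_algebra_1"
  assumes lam: "lam \<noteq> 0" and gA: "gdrazin_inv A Ad" and gD: "gdrazin_inv D Dd"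
    and BD: "B * D = scaleC lam (A * B * (1 - D * Dd))"
  shows "B * Dd = 0" "Ad * B = 0"
    "B * (D - D^2 * Dd) = scaleC lam ((A - A^2 * Ad) * B)"
proof -
  have c1: "Dd * D = D * Dd" and c2: "Dd = Dd * D * Dd" and qD: "quasinilpotent (D - D^2 * Dd)"
    using gD unfolding gdrazin_inv_def by auto
  have c3: "Ad * A = A * Ad" and c4: "Ad = Ad * A * Ad"
    using gA unfolding gdrazin_inv_def by auto
  have "D * Dd * Dd = Dd" using c1 c2 by metis
  then have p0: "(1 - D * Dd) * Dd = 0"
    by (simp add: left_diff_distrib)
  have "B * Dd = B * D * (Dd * Dd)" using c1 c2 by (metis mult.assoc)
  also have "\<dots> = scaleC lam (A * B * ((1 - D * Dd) * Dd) * Dd)"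
    by (simp add: BD mult_scaleC_left mult.assoc)
  finally show BDd: "B * Dd = 0" using p0 by simp
  have X: "A*(B*(D*Dd)) = 0" by (metis c1 BDd mult.assoc mult_zero_left mult_zero_right)
  have BD': "B * D = scaleC lam (A * B)"
    using BD X by (simp add: right_diff_distrib mult.assoc)
  have Bd: "B * (D - D^2 * Dd) = scaleC lam (A * B)"
  proof -
    have "B * (D^2 * Dd) = B * Dd * D * D" using c1
      by (simp add: power2_eq_square mult.assoc)
    then show ?thesis using BDd BD' by (simp add: right_diff_distrib)
  qed
  have "scaleC lam (Ad * B) = Ad * Ad * (B * (D - D^2 * Dd))"
  proof -
    have "Ad = Ad * Ad * A" using c3 c4 by (metis mult.assoc)
    then have "scaleC lam (Ad * B) = scaleC lam (Ad * Ad * A * B)" by simp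
    also have "\<dots> = Ad * Ad * (B * (D - D^2 * Dd))"
      by (simp add: Bd mult_scaleC_right mult.assoc)
    finally show ?thesis .
  qed
  then have "scaleC lam (Ad * B) = Ad * (Ad * B) * (D - D^2 * Dd)"
    by (simp add: mult.assoc)
  then show AdB: "Ad * B = 0" by (rule annih[OF lam qD])
  show "B * (D - D^2 * Dd) = scaleC lam ((A - A^2 * Ad) * B)"
    using Bd AdB by (simp add: left_diff_distrib power2_eq_square mult.assoc)
qed





definition cc :: "complex \<Rightarrow> nat \<Rightarrow> complex" where "cc lam n = (\<Sum>j<n. lam^j)"
definition vv :: "complex \<Rightarrow> nat \<Rightarrow> complex" where "vv lam n = (\<Sum>k<n. cc lam k * lam^(k-1))"

lemma cc_Suc: "cc lam (Suc n) = cc lam n + lam^n" by (simp add: cc_def)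
lemma vv_Suc: "vv lam (Suc n) = vv lam n + cc lam n * lam^(n-1)" by (simp add: vv_def)
lemma cc_0: "cc lam 0 = 0" by (simp add: cc_def)
lemma vv_0: "vv lam 0 = 0" "vv lam (Suc 0) = 0" by (simp_all add: vv_def cc_def)

lemma Bpow:
  fixes B a d :: "'a::complex_banach_algebra_1"
  assumes "B * d = scaleC lam (a * B)"
  shows "B * d^n = scaleC (lam^n) (a^n * B)"
proof (induction n)
  case 0 then show ?case by (simp add: scaleC_one)
next
  case (Suc n)
  have "B * d^Suc n = B * d * d^n" by (simp add: mult.assoc)
  also have "\<dots> = scaleC lam (a * (B * d^n))" using assms
    by (simp add: mult_scaleC_left mult.assoc)
  also have "\<dots> = scaleC (lam^Suc n) (a^Suc n * B)" using Suc
    by (simp add: mult_scaleC_right scaleC_scaleC mult.assoc)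
  finally show ?case .
qed

lemma pow_N:
  fixes a d B C :: "'a::complex_banach_algebra_1"
  assumes BC: "B * C = 0" and Bd: "B * d = scaleC lam (a * B)" and Ca: "C * a = scaleC lam (d * C)"
  shows "mpow (blk2 a B C d) n = blk2 (a^n) (scaleC (cc lam n) (a^(n-1)*B))
     (scaleC (cc lam n) (d^(n-1)*C)) (d^n + scaleC (vv lam n) (d^(n-2)*C*B))"
proof (induction n)
  case 0 then show ?case by (simp add: blk2_one cc_0 vv_0)
next
  case (Suc n)
  have Bd': "B * (d^m * X) = scaleC (lam^m) (a^m * (B * X))" for m X
    using Bpow[OF Bd, of m] by (metis mult.assoc mult_scaleC_left)
  have Ca': "C * (a^m * X) = scaleC (lam^m) (d^m * (C * X))" for m X
    using Bpow[OF Ca, of m] by (metis mult.assoc mult_scaleC_left)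
  have BC': "B * (C * X) = 0" for X using BC by (metis mult.assoc mult_zero_left)
  have e11: "a * a^n + B * scaleC (cc lam n) (d^(n-1)*C) = a^Suc n"
    by (simp add: mult_scaleC_right Bd' mult.assoc BC)
  have e12: "a * scaleC (cc lam n) (a^(n-1)*B) + B * (d^n + scaleC (vv lam n) (d^(n-2)*C*B))
      = scaleC (cc lam (Suc n)) (a^(Suc n - 1)*B)"
  proof (cases n)
    case 0 then show ?thesis by (simp add: cc_0 vv_0 cc_Suc scaleC_one)
  next
    case (Suc m)
    have pa: "a * (a^k * X) = a^Suc k * X" for k X by (simp add: mult.assoc)
    from Suc show ?thesis
      by (simp add: mult_scaleC_right distrib_left Bd' BC' Bpow[OF Bd] mult.assoc cc_Suc scaleC_add_left
         pa del: power_Suc)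
  qed
  have e21: "C * a^n + d * scaleC (cc lam n) (d^(n-1)*C) = scaleC (cc lam (Suc n)) (d^(Suc n - 1)*C)"
  proof (cases n)
    case 0 then show ?thesis by (simp add: cc_0 cc_Suc scaleC_one)
  next
    case (Suc m)
    have pd: "d * (d^k * X) = d^Suc k * X" for k X by (simp add: mult.assoc)
    from Suc show ?thesis
      by (simp add: mult_scaleC_right Bpow[OF Ca] mult.assoc cc_Suc scaleC_add_left add.commute
         pd distrib_left del: power_Suc)
  qed
  have e22: "C * scaleC (cc lam n) (a^(n-1)*B) + d * (d^n + scaleC (vv lam n) (d^(n-2)*C*B))
      = d^Suc n + scaleC (vv lam (Suc n)) (d^(Suc n - 2)*C*B)"
  proof (cases n)
    case 0 then show ?thesis by (simp add: cc_0 vv_0)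
  next
    case (Suc m)
    show ?thesis
    proof (cases m)
      case 0 then show ?thesis using Suc by (simp add: cc_Suc cc_0 vv_0 vv_Suc scaleC_one mult.assoc)
    next
      case (Suc k)
      have pd: "d * (d^j * X) = d^Suc j * X" for j X by (simp add: mult.assoc)
      have pd0: "d * d^j = d^Suc j" for j by simp
      from Suc show ?thesis using \<open>n = Suc m\<close>
        by (simp add: mult_scaleC_right distrib_left Ca' mult.assoc vv_Suc scaleC_add_left
          scaleC_scaleC add.commute add.left_commute mult.commute pd pd0 del: power_Suc)
    qed
  qed
  show ?case
    using Suc.IH e11 e12 e21 e22 by (simp add: blk2_mult)
qed





lemma cc_bound: "cmod (cc lam n) \<le> (2 + cmod lam)^n"
proof (induction n)
  case 0 then show ?case by (simp add: cc_0)
next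
  case (Suc n)
  have "cmod (cc lam (Suc n)) \<le> cmod (cc lam n) + cmod lam ^ n"
    by (simp add: cc_Suc norm_power[symmetric] norm_triangle_ineq del: norm_power)
  also have "\<dots> \<le> (2 + cmod lam)^n + (2 + cmod lam)^n"
    using Suc by (intro add_mono power_mono) auto
  also have "\<dots> \<le> (2 + cmod lam)^Suc n" by (simp, intro mult_right_mono) auto
  finally show ?case .
qed

lemma vv_bound: "cmod (vv lam n) \<le> ((2 + cmod lam)^2)^n"
proof (induction n)
  case 0 then show ?case by (simp add: vv_0)
next
  case (Suc n)
  define K where "K = 2 + cmod lam"
  have K1: "K \<ge> 1" unfolding K_def by simp
  have "cmod (vv lam (Suc n)) \<le> cmod (vv lam n) + cmod (cc lam n) * cmod lam ^ (n-1)"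
    by (simp add: vv_Suc norm_power[symmetric] norm_mult[symmetric] norm_triangle_ineq
      del: norm_power norm_mult)
  also have "\<dots> \<le> (K^2)^n + K^n * K^n"
  proof (intro add_mono mult_mono)
    show "cmod lam ^ (n - 1) \<le> K ^ n"
      using K1 by (metis K_def diff_le_self le_add_same_cancel2 norm_ge_zero order_trans
        power_increasing power_mono zero_le_numeral)
  qed (use Suc cc_bound[of lam n] in \<open>auto simp: K_def\<close>)
  also have "\<dots> \<le> (K^2)^Suc n"
  proof -
    have "(K^2)^n + K^n * K^n = 2 * (K^2)^n"
      by (simp add: power_mult_distrib[symmetric] power2_eq_square)
    also have "\<dots> \<le> K^2 * (K^2)^n"
    proof (intro mult_right_mono)
      have "K \<ge> 2" unfolding K_def by simp
      then show "2 \<le> K^2" using mult_mono[of 2 K 1 K] by (simp add: power2_eq_square)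
    qed simp
    finally show ?thesis by simp
  qed
  finally show ?case unfolding K_def .
qed





lemma shift_bound:
  fixes x :: "'a::real_normed_algebra_1"
  assumes "\<And>m. norm (x^m) \<le> C0 * del^m" "0 < del" "del \<le> 1" "n \<le> m + 2" "C0 \<ge> 0"
  shows "norm (x^m) \<le> (C0 / del^2) * del^n"
proof -
  have "del^m \<le> del^(n-2)" using assms by (intro power_decreasing) auto
  also have "del^(n-2) = del^(n-2) * del^2 / del^2" using assms by simp
  also have "del^(n-2) * del^2 = del^(n - 2 + 2)" by (rule power_add[symmetric])
  also have "\<dots> \<le> del^n" using assms by (intro power_decreasing) auto
  finally have "del^m \<le> del^n / del^2" using assms by (simp add: divide_right_mono)
  then have "C0 * del^m \<le> C0 * (del^n / del^2)" using assms by (intro mult_left_mono) auto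
  then show ?thesis using assms(1)[of m] by simp
qed

lemma qn_N:
  fixes a d B C :: "'a::complex_banach_algebra_1"
  assumes BC: "B * C = 0" and Bd: "B * d = scaleC lam (a * B)" and Ca: "C * a = scaleC lam (d * C)"
    and qa: "quasinilpotent a" and qd: "quasinilpotent d"
  shows "mquasinilpotent (blk2 a B C d)"
  unfolding mquasinilpotent_def
proof (rule root_eps)
  fix e :: real assume e: "e > 0"
  define L where "L = (2 + cmod lam)^2"
  have K1: "1 \<le> 2 + cmod lam" by simp
  have L4: "L \<ge> 1" unfolding L_def by (rule one_le_power[OF K1])
  define del where "del = min 1 (e / L)"
  have d0: "del > 0" "del \<le> 1" "L * del \<le> e" using e L4 unfolding del_def
    by (auto simp: field_simps min_def)
  obtain Ca0 where Ca0: "\<And>m. norm (a^m) \<le> Ca0 * del^m" using qn_eps[OF qa d0(1)] by auto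
  obtain Cd0 where Cd0: "\<And>m. norm (d^m) \<le> Cd0 * del^m" using qn_eps[OF qd d0(1)] by auto
  define C0 where "C0 = max Ca0 Cd0"
  have C00: "C0 \<ge> 0" using Ca0[of 0] unfolding C0_def by simp
  have Ca1: "norm (a^m) \<le> C0 * del^m" for m
  proof -
    have "Ca0 * del^m \<le> C0 * del^m" unfolding C0_def using d0 by (intro mult_right_mono) auto
    then show ?thesis using Ca0[of m] by linarith
  qed
  have Cd1: "norm (d^m) \<le> C0 * del^m" for m
  proof -
    have "Cd0 * del^m \<le> C0 * del^m" unfolding C0_def using d0 by (intro mult_right_mono) auto
    then show ?thesis using Cd0[of m] by linarith
  qed
  define C1 where "C1 = C0 / del^2"
  have C10: "C1 \<ge> 0" unfolding C1_def using C00 d0 by simp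
  have bound: "norm (mpow (blk2 a B C d) n) \<le> C1 * e^n * (2 + norm B + norm C + norm C * norm B)" for n
  proof -
  define t where "t = (L * del)^n"
  have tdel: "C1 * del^n \<le> C1 * t" unfolding t_def using L4 d0 C10
    by (intro mult_left_mono power_mono) auto
  have Lt: "L^n * (C1 * del^n) = C1 * t" unfolding t_def by (simp add: power_mult_distrib)
  have an: "norm (a^m) \<le> C1 * del^n" if "n \<le> m + 2" for m
    unfolding C1_def by (rule shift_bound[OF Ca1 d0(1) d0(2) that C00])
  have dn: "norm (d^m) \<le> C1 * del^n" if "n \<le> m + 2" for m
    unfolding C1_def by (rule shift_bound[OF Cd1 d0(1) d0(2) that C00])
  have cb: "cmod (cc lam n) \<le> L^n"
  proof -
    have "(2 + cmod lam)^n \<le> L^n" unfolding L_def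
      using mult_right_mono[OF K1, of "2 + cmod lam"] by (intro power_mono) (auto simp: power2_eq_square)
    then show ?thesis using cc_bound[of lam n] by simp
  qed
  have vb: "cmod (vv lam n) \<le> L^n" using vv_bound[of lam n] unfolding L_def .
  have h1: "norm (a^n) \<le> C1 * t" using an[of n] tdel by simp
  have h4: "norm (d^n) \<le> C1 * t" using dn[of n] tdel by simp
  have h2: "norm (scaleC (cc lam n) (a^(n-1)*B)) \<le> C1 * t * norm B"
  proof -
    have "norm (scaleC (cc lam n) (a^(n-1)*B)) \<le> L^n * (norm (a^(n-1)) * norm B)"
      unfolding norm_scaleC using cb L4 by (intro mult_mono norm_mult_ineq) auto
    also have "\<dots> \<le> L^n * (C1 * del^n * norm B)"
      using an[of "n-1"] L4 by (intro mult_left_mono mult_right_mono) auto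
    also have "\<dots> = C1 * t * norm B" unfolding t_def by (simp add: power_mult_distrib mult_ac)
    finally show ?thesis .
  qed
  have h3: "norm (scaleC (cc lam n) (d^(n-1)*C)) \<le> C1 * t * norm C"
  proof -
    have "norm (scaleC (cc lam n) (d^(n-1)*C)) \<le> L^n * (norm (d^(n-1)) * norm C)"
      unfolding norm_scaleC using cb L4 by (intro mult_mono norm_mult_ineq) auto
    also have "\<dots> \<le> L^n * (C1 * del^n * norm C)"
      using dn[of "n-1"] L4 by (intro mult_left_mono mult_right_mono) auto
    also have "\<dots> = C1 * t * norm C" unfolding t_def by (simp add: power_mult_distrib mult_ac)
    finally show ?thesis .
  qed
  have h5: "norm (scaleC (vv lam n) (d^(n-2)*C*B)) \<le> C1 * t * (norm C * norm B)"
  proof -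
    have "norm (d^(n-2)*C*B) \<le> norm (d^(n-2)*C) * norm B" by (rule norm_mult_ineq)
    also have "\<dots> \<le> norm (d^(n-2)) * norm C * norm B"
      by (intro mult_right_mono norm_mult_ineq) simp
    finally have "norm (d^(n-2)*C*B) \<le> norm (d^(n-2)) * (norm C * norm B)" by (simp add: mult.assoc)
    then have "norm (scaleC (vv lam n) (d^(n-2)*C*B)) \<le> L^n * (norm (d^(n-2)) * (norm C * norm B))"
      unfolding norm_scaleC using vb L4 by (intro mult_mono) auto
    also have "\<dots> \<le> L^n * (C1 * del^n * (norm C * norm B))"
      using dn[of "n-2"] L4 by (intro mult_left_mono mult_right_mono) auto
    also have "\<dots> = C1 * t * (norm C * norm B)" unfolding t_def by (simp add: power_mult_distrib mult_ac)
    finally show ?thesis .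
  qed
  have "norm (mpow (blk2 a B C d) n) \<le> C1 * t * (2 + norm B + norm C + norm C * norm B)"
  proof -
    have "norm (mpow (blk2 a B C d) n) \<le> norm (a^n) + norm (scaleC (cc lam n) (a^(n-1)*B))
       + norm (scaleC (cc lam n) (d^(n-1)*C)) + (norm (d^n) + norm (scaleC (vv lam n) (d^(n-2)*C*B)))"
      unfolding pow_N[OF BC Bd Ca]
      by (rule order_trans[OF norm_blk2]) (intro add_mono order_refl norm_triangle_ineq)
    also have "\<dots> \<le> C1 * t + C1 * t * norm B + C1 * t * norm C + (C1 * t + C1 * t * (norm C * norm B))"
      using h1 h2 h3 h4 h5 by (intro add_mono) auto
    finally show ?thesis by (simp add: algebra_simps)
  qed
  also have "\<dots> \<le> C1 * e^n * (2 + norm B + norm C + norm C * norm B)"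
    unfolding t_def using d0 C10 L4 by (intro mult_right_mono mult_left_mono power_mono) auto
  finally show ?thesis .
  qed
  show "\<exists>Cc. \<forall>n. norm (mpow (blk2 a B C d) n) \<le> Cc * e ^ n"
  proof (intro exI allI)
    fix n
    show "norm (mpow (blk2 a B C d) n) \<le> (C1 * (2 + norm B + norm C + norm C * norm B)) * e ^ n"
      using bound[of n] by (simp add: algebra_simps)
  qed
qed (simp)




lemma zero_mmult: "(0::'a::semiring_1 mat2) ** X = 0"
  by (simp add: matrix_matrix_mult_def vec_eq_iff)

theorem corollary3p2:
  fixes A B C D Ad Dd :: "'a::complex_banach_algebra_1" and lam :: complex
  assumes "lam \<noteq> 0"
    and "gdrazin_inv A Ad" and "gdrazin_inv D Dd"
    and "B * D = scaleC lam (A * B * (1 - D * Dd))"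
    and "C * A = scaleC lam (D * C * (1 - A * Ad))"
    and "B * C = 0"
  shows "summable (\<lambda>n. mpow (blk2 Ad 0 0 Dd) (n + 2) ** blk2 0 B C 0 ** mpow (blk2 A B C D) n)
    \<and> mgdrazin_inv (blk2 A B C D)
        (blk2 Ad 0 0 Dd + (\<Sum>n. mpow (blk2 Ad 0 0 Dd) (n + 2) ** blk2 0 B C 0 ** mpow (blk2 A B C D) n))"
proof -
  note h1 = half[OF assms(1) assms(2) assms(3) assms(4)]
  note h2 = half[OF assms(1) assms(3) assms(2) assms(5)]
  have c1: "Dd * D = D * Dd" and c2: "Dd = Dd * D * Dd" and qD: "quasinilpotent (D - D^2 * Dd)"
    using assms(3) unfolding gdrazin_inv_def by auto
  have c3: "Ad * A = A * Ad" and c4: "Ad = Ad * A * Ad" and qA: "quasinilpotent (A - A^2 * Ad)"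
    using assms(2) unfolding gdrazin_inv_def by auto
  have z: "mpow (blk2 Ad 0 0 Dd) (n + 2) ** blk2 0 B C 0 ** mpow (blk2 A B C D) n = 0" for n
  proof -
    have e1: "Ad^(n+2) = Ad^(n+1)*Ad" "Dd^(n+2) = Dd^(n+1)*Dd" by (metis Suc_1 add_Suc_right power_Suc2)+
    have "Ad^(n+2) * B = 0" unfolding e1 using h1(2) by (simp add: mult.assoc)
    moreover have "Dd^(n+2) * C = 0" unfolding e1 using h2(2) by (simp add: mult.assoc)
    ultimately have "mpow (blk2 Ad 0 0 Dd) (n + 2) ** blk2 0 B C 0 = 0"
      by (simp add: mpow_diag blk2_mult blk2_zero[symmetric])
    then show ?thesis by (simp add: zero_mmult)
  qed
  have fz: "(\<lambda>n. mpow (blk2 Ad 0 0 Dd) (n + 2) ** blk2 0 B C 0 ** mpow (blk2 A B C D) n) = (\<lambda>n. 0)"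
    using z by (rule ext)
  define M where "M = blk2 A B C D"
  define P where "P = blk2 Ad 0 0 Dd"
  have MP: "M ** P = blk2 (A*Ad) 0 0 (D*Dd)"
    unfolding M_def P_def using h1(1) h2(1) by (simp add: blk2_mult)
  have PM: "P ** M = M ** P"
    unfolding MP unfolding M_def P_def using h1(2) h2(2) c1 c3 by (simp add: blk2_mult)
  have c2': "Dd * (D * Dd) = Dd" and c4': "Ad * (A * Ad) = Ad" using c2 c4 by (metis mult.assoc)+
  have PMP: "P ** M ** P = P"
    unfolding M_def P_def
    using c2' c4' h1(2) h2(2) by (simp add: blk2_mult mult.assoc)
  have bd0: "B*(D*Dd) = 0" using c1 h1(1) by (metis mult.assoc mult_zero_left)
  have ca0: "C*(A*Ad) = 0" using c3 h2(1) by (metis mult.assoc mult_zero_left)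
  have "M ** M ** P = blk2 (A^2*Ad) 0 0 (D^2*Dd)"
    unfolding matrix_mul_assoc[symmetric] MP unfolding M_def using bd0 ca0
    by (simp add: blk2_mult power2_eq_square mult.assoc)
  then have "M - M ** M ** P = blk2 (A - A^2*Ad) B C (D - D^2*Dd)"
    unfolding M_def by (simp add: blk2_diff)
  moreover have "mquasinilpotent (blk2 (A - A^2*Ad) B C (D - D^2*Dd))"
    by (rule qn_N[OF assms(6) h1(3) h2(3) qA qD])
  ultimately have "mgdrazin_inv M P"
    unfolding mgdrazin_inv_def using PM PMP by simp
  then show ?thesis unfolding fz by (simp add: M_def P_def)
qed



end
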